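(* Let $\varepsilon>0$ and $k\ge1$. There exist datasets $D_1,D_2,D_3$ with $(D_1,D_2)$ and $(D_2,D_3)$ neighboring pairs, and a sequence $Q$ of $k$ counting queries, such that running VanillaSVT$(\cdot,Q,\theta=0,\lambda,t=1)$ (described below), the output $E$ with $o_1=\dots=o_{k-1}=\bot$ and $o_k=1$ satisfies $\frac{p_{D_1}(E)}{p_{D_3}(E)}=e^{k/\lambda}$, where $p_D(E)$ is the output probability density at $E$ on input $D$. Consequently VanillaSVT with $t=1$ does not satisfy $\varepsilon$-differential privacy whenever $\lambda<\frac{k}{2\varepsilon}$.
   Context: $\mathrm{Lap}(\lambda)$ is the Laplace distribution with density $\frac{1}{2\lambda}e^{-|y|/\lambda}$. A dataset is a finite multiset of tuples; two datasets are neighboring if one is obtained by inserting one tuple into the other. A counting query counts the tuples satisfying a predicate. VanillaSVT$(D,Q=(q_1,\dots,q_k),\theta,\lambda,t)$: set $cnt=0$; draw $\hat\theta=\theta+\mathrm{Lap}(\lambda)$ once; for $i=1,\dots,k$: draw $\hat q_i(D)=q_i(D)+\mathrm{Lap}(t\lambda)$ (independent noises); if $\hat q_i(D)>\hat\theta$, output $o_i=\hat q_i(D)$, increase $cnt$ by one and stop if $cnt\ge t$; otherwise output $o_i=\bot$. An algorithm is $\varepsilon$-differentially private if for all neighboring $D,D'$ the output densities satisfy $p_D(O)\le e^{\varepsilon}p_{D'}(O)$ for all outputs $O$. *)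

theory Defs
  imports "HOL-Analysis.Analysis" "HOL-Library.Multiset"
begin

definition neighboring :: "'a multiset \<Rightarrow> 'a multiset \<Rightarrow> bool" where
  "neighboring D D' \<longleftrightarrow> (\<exists>x. D' = add_mset x D) \<or> (\<exists>x. D = add_mset x D')"

definition count_query :: "('a \<Rightarrow> bool) \<Rightarrow> 'a multiset \<Rightarrow> real" where
  "count_query P D = real (size (filter_mset P D))"

definition lap_pdf :: "real \<Rightarrow> real \<Rightarrow> real \<Rightarrow> real" where
  "lap_pdf lam mu y = exp (- \<bar>y - mu\<bar> / lam) / (2 * lam)"

definition lap_cdf :: "real \<Rightarrow> real \<Rightarrow> real \<Rightarrow> real" where
  "lap_cdf lam mu z = (LINT y|lborel. indicator {..z} y * lap_pdf lam mu y)"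

text \<open>Output density of VanillaSVT(D, Q, theta, lam, t = 1) at an output sequence os,
  where None stands for bottom and Some v for a numerical output v.
  Noisy threshold: theta + Lap(lam); noisy queries: q_i(D) + Lap(t*lam) = q_i(D) + Lap(lam).
  With t = 1 the algorithm stops after the first positive answer, so the possible outputs are
  bottom^(j-1) followed by a value (1 <= j <= k), or bottom^k.  The density of the continuous
  component is taken w.r.t. Lebesgue measure in the numerical coordinate; the density of the
  all-bottom output is its probability.  Conditioning on the noisy threshold z:
  bottom at position i has probability P(q_i(D) + Lap(lam) <= z), and a value v at position j
  has density lap_pdf lam (q_j(D)) v and requires v > z.\<close>

definition svt1_density ::
  "('a \<Rightarrow> bool) list \<Rightarrow> real \<Rightarrow> real \<Rightarrow> 'a multiset \<Rightarrow> real option list \<Rightarrow> real" where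
  "svt1_density Q theta lam D os =
     (if os = replicate (length Q) None then
        (LINT z|lborel. lap_pdf lam theta z *
            (\<Prod>i<length Q. lap_cdf lam (count_query (Q ! i) D) z))
      else if (\<exists>j v. 1 \<le> j \<and> j \<le> length Q \<and> os = replicate (j - 1) None @ [Some v]) then
        (let j = length os; v = the (last os) in
          (LINT z|lborel. lap_pdf lam theta z *
            (\<Prod>i<j - 1. lap_cdf lam (count_query (Q ! i) D) z) *
            lap_pdf lam (count_query (Q ! (j - 1)) D) v *
            indicator {..<v} z))
      else 0)"

definition svt1_dp :: "real \<Rightarrow> ('a \<Rightarrow> bool) list \<Rightarrow> real \<Rightarrow> real \<Rightarrow> bool" where
  "svt1_dp eps Q theta lam \<longleftrightarrow>
     (\<forall>D D' os. neighboring D D' \<longrightarrow>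
        svt1_density Q theta lam D os \<le> exp eps * svt1_density Q theta lam D' os)"

end

theory Submission
  imports Defs
begin

lemma ray_hb:
  fixes a c :: real assumes a: "a > 0"
  shows "has_bochner_integral lborel (\<lambda>x. exp (-a*x) * indicator {c..} x) (exp (-a*c)/a)"
proof (rule has_bochner_integral_nn_integral)
  show "(\<lambda>x. exp (-a*x) * indicator {c..} x) \<in> borel_measurable lborel" by simp
  show "AE x in lborel. 0 \<le> exp (-a*x) * indicator {c..} x" by (simp add: indicator_def)
  show "0 \<le> exp (-a*c)/a" using a by simp
  have FTC: "(\<integral>\<^sup>+x. ennreal (exp (-a*x)) * indicator {c..} x \<partial>lborel) = 0 - (- exp (-a*c)/a)"
  proof (rule nn_integral_FTC_atLeast)
    show "(\<lambda>x. exp (-a*x)) \<in> borel_measurable borel" by simp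
    show "DERIV (\<lambda>x. - exp (-a*x)/a) x :> exp (-a*x)" for x
      using a by (auto intro!: derivative_eq_intros)
    show "0 \<le> exp (-a*x)" for x by simp
    have "((\<lambda>x. exp (-a*x)) \<longlongrightarrow> 0) at_top" using a by real_asymp
    from tendsto_minus[OF tendsto_divide_zero[OF this, of a]]
    show "((\<lambda>x. - exp (-a*x)/a) \<longlongrightarrow> 0) at_top" by simp
  qed
  show "(\<integral>\<^sup>+x. ennreal (exp (-a*x) * indicator {c..} x) \<partial>lborel) = ennreal (exp (-a*c)/a)"
  proof -
    have "(\<lambda>x. ennreal (exp (-a*x) * indicator {c..} x)) = (\<lambda>x. ennreal (exp (-a*x)) * indicator {c..} x)"
      by (auto simp: indicator_def fun_eq_iff)
    with FTC show ?thesis by simp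
  qed
qed

lemma ray:
  fixes a c :: real assumes a: "a > 0"
  shows "integrable lborel (\<lambda>y. indicator {..c} y * exp (a*y))"
    and "(LINT y|lborel. indicator {..c} y * exp (a*y)) = exp (a*c)/a"
proof -
  define g where "g = (\<lambda>x. exp (-a*x) * indicator {-c..} x)"
  have hb: "has_bochner_integral lborel g (exp (a*c)/a)"
    using ray_hb[OF a, of "-c"] by (simp add: g_def)
  have eq: "(\<lambda>y. indicator {..c} y * exp (a*y)) = (\<lambda>y. g (0 + (-1) * y))"
    by (auto simp: g_def indicator_def)
  show "integrable lborel (\<lambda>y. indicator {..c} y * exp (a*y))"
    unfolding eq using lborel_integrable_real_affine_iff[of "-1" g 0] hb
    by (simp add: has_bochner_integral_iff)
  show "(LINT y|lborel. indicator {..c} y * exp (a*y)) = exp (a*c)/a"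
    unfolding eq using lborel_integral_real_affine[of "-1" g 0] hb
    by (simp add: has_bochner_integral_iff)
qed

lemma cdf_val:
  fixes lam mu z :: real assumes lam: "lam > 0" and z: "z \<le> mu"
  shows "lap_cdf lam mu z = exp ((z - mu)/lam)/2"
proof -
  have pt: "indicator {..z} y * lap_pdf lam mu y =
        (exp (-mu/lam)/(2*lam)) * (indicator {..z} y * exp ((1/lam)*y))" for y
  proof (cases "y \<le> z")
    case True
    then have a: "\<bar>y - mu\<bar> = mu - y" using z by simp
    have b: "- \<bar>y - mu\<bar> / lam = -mu/lam + (1/lam)*y"
      unfolding a using lam by (simp add: field_simps)
    have c: "exp (- \<bar>y - mu\<bar> / lam) = exp (-mu/lam) * exp ((1/lam)*y)"
      unfolding b by (rule exp_add)
    show ?thesis using True unfolding lap_pdf_def c by simp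
  next
    case False then show ?thesis by simp
  qed
  have "lap_cdf lam mu z = (LINT y|lborel. (exp (-mu/lam)/(2*lam)) * (indicator {..z} y * exp ((1/lam)*y)))"
    unfolding lap_cdf_def pt by (rule refl)
  also have "\<dots> = (exp (-mu/lam)/(2*lam)) * (LINT y|lborel. indicator {..z} y * exp ((1/lam)*y))"
    by (rule integral_mult_right_zero)
  also have "\<dots> = (exp (-mu/lam)/(2*lam)) * (exp ((1/lam)*z)/(1/lam))"
    using ray(2)[of "1/lam" z] lam by simp
  also have "\<dots> = (exp (-mu/lam) * exp ((1/lam)*z))/2"
    using lam by simp
  also have "exp (-mu/lam) * exp ((1/lam)*z) = exp ((z - mu)/lam)"
  proof -
    have "(z - mu)/lam = -mu/lam + (1/lam)*z" using lam by (simp add: field_simps)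
    then show ?thesis by (simp only: exp_add)
  qed
  finally show ?thesis .
qed

lemma dens_eq:
  "svt1_density (replicate (Suc m) P) th lam D (replicate m None @ [Some v]) =
   (LINT z|lborel. lap_pdf lam th z * (lap_cdf lam (count_query P D) z)^m *
       lap_pdf lam (count_query P D) v * indicator {..<v} z)"
proof -
  have ne: "replicate m None @ [Some v] \<noteq> replicate (Suc m) None"
    by (simp flip: replicate_append_same)
  have ne2: "replicate m None @ [Some v] \<noteq> replicate (length (replicate (Suc m) P)) None"
    unfolding length_replicate by (rule ne)
  have ex: "\<exists>j w. 1 \<le> j \<and> j \<le> length (replicate (Suc m) P) \<and>
      replicate m None @ [Some v] = replicate (j - 1) None @ [Some w]"
    by (rule exI[of _ "Suc m"], rule exI[of _ v]) (simp only: length_replicate diff_Suc_1, simp)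
  have pr: "(\<Prod>i<m. lap_cdf lam (count_query (replicate (Suc m) P ! i) D) z) =
            (lap_cdf lam (count_query P D) z)^m" for z
  proof -
    have "(\<Prod>i<m. lap_cdf lam (count_query (replicate (Suc m) P ! i) D) z) =
          (\<Prod>i<m. lap_cdf lam (count_query P D) z)"
      by (rule prod.cong) (auto simp del: replicate_Suc)
    then show ?thesis by simp
  qed
  show ?thesis
  proof -
    have l: "length (replicate m None @ [Some v]) = Suc m" by simp
    have t: "the (last (replicate m None @ [Some v])) = v" by simp
    have n: "replicate (Suc m) P ! m = P" by (simp only: nth_replicate lessI)
    show ?thesis
      unfolding svt1_density_def
      apply (subst if_not_P[OF ne2])
      apply (subst if_P[OF ex])
      apply (simp only: Let_def l t diff_Suc_1 n pr)
      done
  qed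
qed

definition hh :: "real \<Rightarrow> nat \<Rightarrow> real \<Rightarrow> real \<Rightarrow> real" where
  "hh lam m c z = lap_pdf lam 0 z * (exp ((z - c)/lam)/2)^m * lap_pdf lam c 1 * indicator {..<1} z"

lemma J_hh:
  assumes lam: "lam > 0" and c: "c \<ge> 1"
  shows "(LINT z|lborel. lap_pdf lam 0 z * (lap_cdf lam c z)^m * lap_pdf lam c 1 * indicator {..<1} z)
       = (LINT z|lborel. hh lam m c z)"
proof (rule Bochner_Integration.integral_cong[OF refl])
  fix z show "lap_pdf lam 0 z * (lap_cdf lam c z)^m * lap_pdf lam c 1 * indicator {..<1} z = hh lam m c z"
  proof (cases "z < 1")
    case True
    then have cz: "lap_cdf lam c z = exp ((z - c)/lam)/2" using cdf_val[OF lam, of z c] c by simp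
    show ?thesis unfolding hh_def cz by simp
  qed (simp add: hh_def)
qed

lemma hh_rel:
  assumes lam: "lam > 0"
  shows "hh lam m 1 z = exp (real (Suc m)/lam) * hh lam m 2 z"
proof -
  have e: "exp ((z - 1)/lam)/2 = exp (1/lam) * (exp ((z - 2)/lam)/2)"
    by (simp add: exp_add[symmetric] diff_divide_distrib)
  have p1: "lap_pdf lam 1 1 = 1/(2*lam)" by (simp add: lap_pdf_def)
  have p2: "lap_pdf lam 2 1 = exp (-1/lam)/(2*lam)" by (simp add: lap_pdf_def)
  have k: "exp (real (Suc m)/lam) = exp (1/lam)^m * exp (1/lam)"
    by (simp add: exp_of_nat_mult[symmetric] exp_add[symmetric] add_divide_distrib)
  have em: "exp (1/lam) * exp (-1/lam) = 1" by (simp add: exp_add[symmetric])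
  show ?thesis unfolding hh_def e p1 p2 k power_mult_distrib
    using em by (simp add: field_simps)
qed

lemma hh_nonneg: "lam > 0 \<Longrightarrow> 0 \<le> hh lam m c z"
  by (simp add: hh_def lap_pdf_def)

lemma hh_pos:
  assumes lam: "lam > 0"
  shows "(LINT z|lborel. hh lam m 2 z) > 0"
proof -
  define B where "B = (\<lambda>z. exp (-1/lam)/(4*lam^2) * (indicator {..1} z * exp ((1/lam)*z)))"
  define C2 where "C2 = (exp (-2/lam)/2)^m * exp (-1/lam)/(4*lam^2)"
  define G where "G = (\<lambda>z. C2 * (indicator {..0} z * exp ((real (Suc m)/lam)*z)))"
  have C2pos: "C2 > 0" unfolding C2_def using lam by simp
  have intB: "integrable lborel B" unfolding B_def using ray(1)[of "1/lam" 1] lam by simp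
  have intG: "integrable lborel G" unfolding G_def using ray(1)[of "real (Suc m)/lam" 0] lam by simp
  have intG_val: "(LINT z|lborel. G z) = C2 * (1/(real (Suc m)/lam))"
    unfolding G_def using ray(2)[of "real (Suc m)/lam" 0] lam by simp
  have bnd: "hh lam m 2 z \<le> B z" for z
  proof (cases "z < 1")
    case True
    have b0: "0 \<le> exp ((z - 2)/lam)/2" by simp
    have b1: "exp ((z - 2)/lam)/2 \<le> 1"
    proof -
      have "(z - 2)/lam \<le> 0" using True lam by (simp add: divide_le_0_iff)
      then have "exp ((z - 2)/lam) \<le> 1" by simp
      then show ?thesis by linarith
    qed
    have pw: "(exp ((z - 2)/lam)/2)^m \<le> 1" using b0 b1 by (rule power_le_one)
    have ea: "exp (- \<bar>z\<bar>/lam) \<le> exp ((1/lam)*z)"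
    proof -
      have "- \<bar>z\<bar> \<le> z" by simp
      then have "- \<bar>z\<bar>/lam \<le> z/lam" using lam by (simp only: divide_right_mono less_imp_le)
      then show ?thesis by simp
    qed
    have "hh lam m 2 z = (exp (- \<bar>z\<bar>/lam)/(2*lam)) * (exp ((z - 2)/lam)/2)^m * (exp (-1/lam)/(2*lam))"
      using True by (simp add: hh_def lap_pdf_def)
    also have "\<dots> \<le> (exp ((1/lam)*z)/(2*lam)) * 1 * (exp (-1/lam)/(2*lam))"
      apply (intro mult_right_mono mult_mono divide_right_mono ea pw)
      using lam by auto
    also have "\<dots> = B z" using True lam by (simp add: B_def power2_eq_square field_simps)
    finally show ?thesis .
  next
    case False then show ?thesis using lam by (simp add: hh_def B_def)
  qed
  have inth: "integrable lborel (hh lam m 2)"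
  proof (rule Bochner_Integration.integrable_bound[OF intB])
    show "hh lam m 2 \<in> borel_measurable lborel" unfolding hh_def lap_pdf_def by simp
    show "AE x in lborel. norm (hh lam m 2 x) \<le> norm (B x)"
      using bnd hh_nonneg[OF lam] by (auto intro!: AE_I2 order_trans[OF _ abs_ge_self])
  qed
  have low: "G z \<le> hh lam m 2 z" for z
  proof (cases "z \<le> 0")
    case True
    have e1: "exp ((z - 2)/lam)/2 = exp (z/lam) * (exp (-2/lam)/2)"
      by (simp add: exp_add[symmetric] diff_divide_distrib)
    have e2: "exp ((real (Suc m)/lam)*z) = exp (z/lam) * exp (z/lam)^m"
      by (simp add: exp_of_nat_mult[symmetric] exp_add[symmetric] add_divide_distrib field_simps)
    have az: "\<bar>z\<bar> = - z" using True by simp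
    show ?thesis using True lam
      unfolding G_def hh_def lap_pdf_def C2_def e1 e2 power_mult_distrib az
      by (simp add: power2_eq_square field_simps)
  next
    case False then show ?thesis using hh_nonneg[OF lam] by (simp add: G_def)
  qed
  have "(LINT z|lborel. G z) \<le> (LINT z|lborel. hh lam m 2 z)"
    by (rule Bochner_Integration.integral_mono[OF intG inth low])
  moreover have "(LINT z|lborel. G z) > 0" unfolding intG_val using C2pos lam by simp
  ultimately show ?thesis by linarith
qed

theorem mainTheorem10:
  fixes eps lam :: real and k :: nat
  assumes "eps > 0" and "k \<ge> 1" and "lam > 0"
  shows "(\<exists>(D1::nat multiset) D2 D3 (Q::(nat \<Rightarrow> bool) list).
            neighboring D1 D2 \<and> neighboring D2 D3 \<and> length Q = k \<and>
            svt1_density Q 0 lam D1 (replicate (k - 1) None @ [Some 1])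
              / svt1_density Q 0 lam D3 (replicate (k - 1) None @ [Some 1])
            = exp (real k / lam))
       \<and> (lam < real k / (2 * eps) \<longrightarrow>
            (\<exists>Q::(nat \<Rightarrow> bool) list. length Q = k \<and> \<not> svt1_dp eps Q 0 lam))"
proof -
  have lam: "lam > 0" by (rule assms(3))
  obtain m where k: "k = Suc m" using assms(2) by (cases k) auto
  define P where "P = (\<lambda>x::nat. x = 0)"
  define Q where "Q = replicate k P"
  define os where "os = replicate (k - 1) None @ [Some (1::real)]"
  define I2 where "I2 = (LINT z|lborel. hh lam m 2 z)"
  have I2pos: "I2 > 0" unfolding I2_def by (rule hh_pos[OF lam])
  have c1: "count_query P {#0#} = 1" by (simp add: count_query_def P_def)
  have c2: "count_query P {#0,0#} = 2" by (simp add: count_query_def P_def)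
  have c3: "count_query P (add_mset 1 {#0,0#}) = 2" by (simp add: count_query_def P_def)
  have dens: "svt1_density Q 0 lam D os = (LINT z|lborel. hh lam m (count_query P D) z)"
    if "count_query P D \<ge> 1" for D
  proof -
    have o: "os = replicate m None @ [Some 1]" by (simp add: os_def k)
    have q: "Q = replicate (Suc m) P" by (simp add: Q_def k)
    show ?thesis unfolding o q by (rule trans[OF dens_eq J_hh[OF lam that]])
  qed
  have d1: "svt1_density Q 0 lam {#0#} os = exp (real k/lam) * I2"
  proof -
    have "svt1_density Q 0 lam {#0#} os = (LINT z|lborel. exp (real (Suc m)/lam) * hh lam m 2 z)"
      using dens[of "{#0#}"] c1 hh_rel[OF lam, of m] by simp
    also have "\<dots> = exp (real k/lam) * I2" unfolding I2_def k by (rule integral_mult_right_zero)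
    finally show ?thesis .
  qed
  have d2: "svt1_density Q 0 lam {#0,0#} os = I2"
    using dens[of "{#0,0#}"] c2 by (simp add: I2_def)
  have d3: "svt1_density Q 0 lam (add_mset 1 {#0,0#}) os = I2"
    using dens[of "add_mset 1 {#0,0#}"] c3 by (simp add: I2_def)
  have n12: "neighboring {#0::nat#} {#0,0#}" unfolding neighboring_def by (rule disjI1, rule exI[of _ 0], simp)
  have n23: "neighboring {#0::nat,0#} (add_mset 1 {#0,0#})" unfolding neighboring_def by (rule disjI1, rule exI[of _ 1], simp)
  have lenQ: "length Q = k" by (simp add: Q_def)
  have part1: "\<exists>(D1::nat multiset) D2 D3 (Q::(nat \<Rightarrow> bool) list).
            neighboring D1 D2 \<and> neighboring D2 D3 \<and> length Q = k \<and>
            svt1_density Q 0 lam D1 (replicate (k - 1) None @ [Some 1])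
              / svt1_density Q 0 lam D3 (replicate (k - 1) None @ [Some 1])
            = exp (real k / lam)"
  proof (intro exI conjI)
    show "neighboring {#0::nat#} {#0,0#}" by (rule n12)
    show "neighboring {#0::nat,0#} (add_mset 1 {#0,0#})" by (rule n23)
    show "length Q = k" by (rule lenQ)
    show "svt1_density Q 0 lam {#0#} (replicate (k - 1) None @ [Some 1])
              / svt1_density Q 0 lam (add_mset 1 {#0,0#}) (replicate (k - 1) None @ [Some 1])
            = exp (real k / lam)"
      using d1 d3 I2pos unfolding os_def by simp
  qed
  have part2: "\<exists>Q::(nat \<Rightarrow> bool) list. length Q = k \<and> \<not> svt1_dp eps Q 0 lam"
    if lt: "lam < real k / (2 * eps)"
  proof (intro exI conjI)
    show "length Q = k" by (rule lenQ)
    have "lam * (2 * eps) < real k" using lt assms(1) by (simp add: pos_less_divide_eq)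
    then have "eps < real k / lam" using lam assms(1) by (simp add: pos_less_divide_eq algebra_simps)
    then have "exp eps < exp (real k / lam)" by simp
    then have "exp eps * I2 < exp (real k / lam) * I2" using I2pos by simp
    then have "\<not> svt1_density Q 0 lam {#0#} os \<le> exp eps * svt1_density Q 0 lam {#0,0#} os"
      using d1 d2 by simp
    then show "\<not> svt1_dp eps Q 0 lam" unfolding svt1_dp_def using n12 by blast
  qed
  show ?thesis using part1 part2 by blast
qed

end
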